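(* Let $a,b$ be distinct positive real numbers and write $G=G(a,b)$, $L=L(a,b)$, $I=I(a,b)$. Then $$\frac{G\cdot I}{L}<\sqrt{I\cdot G}<L(I,G)<L,$$ $$\big(L(I,G)\big)^2<L\cdot L(I,G)<L(I^2,G^2)<L\cdot\frac{I+G}{2}.$$
   Context: For positive reals $x\neq y$: $G(x,y)=\sqrt{xy}$, logarithmic mean $L(x,y)=\frac{x-y}{\log x-\log y}$, identric mean $I(x,y)=\frac{1}{e}\left(\frac{x^x}{y^y}\right)^{1/(x-y)}$. *)

theory Defs
  imports Complex_Main
begin

definition geo_mean :: "real \<Rightarrow> real \<Rightarrow> real" where
  "geo_mean x y = sqrt (x * y)"

definition log_mean :: "real \<Rightarrow> real \<Rightarrow> real" where
  "log_mean x y = (x - y) / (ln x - ln y)"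

definition identric_mean :: "real \<Rightarrow> real \<Rightarrow> real" where
  "identric_mean x y = (1 / exp 1) * ((x powr x) / (y powr y)) powr (1 / (x - y))"

end

theory Submission
  imports Defs "HOL-Real_Asymp.Real_Asymp"
begin


lemma sinh_ser: "(\<lambda>n. (if even n then 0 else k^n) * t^n / fact n) sums sinh (k*t::real)"
proof -
  have "(\<lambda>n. if even n then 0 else (k*t)^n /\<^sub>R fact n) sums sinh (k*t)" by (rule sinh_converges)
  moreover have "(\<lambda>n. if even n then 0 else (k*t)^n /\<^sub>R fact n) = (\<lambda>n. (if even n then 0 else k^n) * t^n / fact n)"
    by (auto simp: power_mult_distrib divide_inverse)
  ultimately show ?thesis by simp
qed

lemma cosh_ser: "(\<lambda>n. (if even n then k^n else 0) * t^n / fact n) sums cosh (k*t::real)"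
proof -
  have "(\<lambda>n. if even n then (k*t)^n /\<^sub>R fact n else 0) sums cosh (k*t)" by (rule cosh_converges)
  moreover have "(\<lambda>n. if even n then (k*t)^n /\<^sub>R fact n else 0) = (\<lambda>n. (if even n then k^n else 0) * t^n / fact n)"
    by (auto simp: power_mult_distrib divide_inverse)
  ultimately show ?thesis by simp
qed

lemma const_ser: "(\<lambda>n. (if n = 0 then c else 0) * t^n / fact n) sums (c::real)"
proof -
  have "(\<lambda>n. (if n = 0 then c else 0) * t^n / fact n) = (\<lambda>n. if n = 0 then c else 0)" by auto
  then show ?thesis using sums_single[of 0 "\<lambda>_. c"] by simp
qed

lemma ser_shift:
  assumes "(\<lambda>n. c n * t^n / fact n) sums (S::real)"
  shows "(\<lambda>n. (if n < j then 0 else c (n-j) * (fact n / fact (n-j))) * t^n / fact n) sums (t^j * S)"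
proof -
  have "(\<lambda>n. t^j * (c n * t^n / fact n)) sums (t^j * S)" using sums_mult[OF assms] by simp
  moreover have "(\<lambda>n. t^j * (c n * t^n / fact n)) = (\<lambda>i. (\<lambda>n. (if n < j then 0 else c (n-j) * (fact n / fact (n-j))) * t^n / fact n) (i + j))"
    by (auto simp: power_add field_simps)
  ultimately have "(\<lambda>i. (\<lambda>n. (if n < j then 0 else c (n-j) * (fact n / fact (n-j))) * t^n / fact n) (i + j)) sums (t^j * S)" by simp
  then show ?thesis by (subst (asm) sums_zero_iff_shift) auto
qed

lemma fact1: "n \<ge> 1 \<Longrightarrow> fact n / fact (n-1) = (real n :: real)"
  by (cases n) auto
lemma fact2: "n \<ge> 2 \<Longrightarrow> fact n / fact (n-2) = (real n * (real n - 1) :: real)"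
proof -
  assume "n \<ge> 2" then obtain m where "n = Suc (Suc m)" by (metis add_2_eq_Suc le_Suc_ex)
  then show ?thesis by (simp add: field_simps)
qed
lemma fact3: "n \<ge> 3 \<Longrightarrow> fact n / fact (n-3) = (real n * (real n - 1) * (real n - 2) :: real)"
proof -
  assume "n \<ge> 3" then obtain m where "n = Suc (Suc (Suc m))"
    using le_Suc_ex[of 3 n] by (auto simp: numeral_3_eq_3)
  then show ?thesis by (simp add: field_simps)
qed

lemma ser1:
  assumes "(\<lambda>n. c n * t^n / fact n) sums (S::real)"
  shows "(\<lambda>n. (if n < 1 then 0 else c (n-1) * real n) * t^n / fact n) sums (t * S)"
proof -
  have "(\<lambda>n. (if n < 1 then 0 else c (n-1) * (fact n / fact (n-1))) * t^n / fact n) = (\<lambda>n. (if n < 1 then 0 else c (n-1) * real n) * t^n / fact n)"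
    using fact1 by (intro ext) auto
  then show ?thesis using ser_shift[OF assms, of 1] by simp
qed
lemma ser2:
  assumes "(\<lambda>n. c n * t^n / fact n) sums (S::real)"
  shows "(\<lambda>n. (if n < 2 then 0 else c (n-2) * (real n * (real n - 1))) * t^n / fact n) sums (t^2 * S)"
proof -
  have "(\<lambda>n. (if n < 2 then 0 else c (n-2) * (fact n / fact (n-2))) * t^n / fact n) = (\<lambda>n. (if n < 2 then 0 else c (n-2) * (real n * (real n - 1))) * t^n / fact n)"
    using fact2 by (intro ext) auto
  then show ?thesis using ser_shift[OF assms, of 2] by simp
qed
lemma ser3:
  assumes "(\<lambda>n. c n * t^n / fact n) sums (S::real)"
  shows "(\<lambda>n. (if n < 3 then 0 else c (n-3) * (real n * (real n - 1) * (real n - 2))) * t^n / fact n) sums (t^3 * S)"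
proof -
  have "(\<lambda>n. (if n < 3 then 0 else c (n-3) * (fact n / fact (n-3))) * t^n / fact n) = (\<lambda>n. (if n < 3 then 0 else c (n-3) * (real n * (real n - 1) * (real n - 2))) * t^n / fact n)"
    using fact3 by (intro ext) auto
  then show ?thesis using ser_shift[OF assms, of 3] by simp
qed

lemma ser_pos:
  assumes "(\<lambda>n. q n * t^n / fact n) sums (S::real)" "t > 0" "\<And>n. q n \<ge> 0" "q i > 0"
  shows "S > 0"
proof -
  have "0 < suminf (\<lambda>n. q n * t^n / fact n)"
    using assms by (intro suminf_pos2[where i=i]) (auto simp: sums_summable)
  then show ?thesis using assms(1) sums_unique by metis
qed

lemma ser_add: "(\<lambda>n. a n * t^n / fact n) sums A \<Longrightarrow> (\<lambda>n. b n * t^n / fact n) sums B \<Longrightarrow> (\<lambda>n. (a n + b n) * t^n / fact n) sums (A + B::real)"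
  by (drule (1) sums_add) (simp add: add_divide_distrib distrib_right)
lemma ser_diff: "(\<lambda>n. a n * t^n / fact n) sums A \<Longrightarrow> (\<lambda>n. b n * t^n / fact n) sums B \<Longrightarrow> (\<lambda>n. (a n - b n) * t^n / fact n) sums (A - B::real)"
  by (drule (1) sums_diff) (simp add: diff_divide_distrib left_diff_distrib)
lemma ser_cmult: "(\<lambda>n. a n * t^n / fact n) sums A \<Longrightarrow> (\<lambda>n. (c * a n) * t^n / fact n) sums (c * A::real)"
  by (drule sums_mult[where c=c]) (simp add: mult.assoc)

lemma NA_pos:
  fixes t :: real assumes "t > 0"
  shows "t * sinh t * cosh t - 2 * (sinh t)^2 + t^2 > 0"
proof -
  have s1: "(\<lambda>n. (if n < 1 then 0 else (if even (n-1) then 0 else 2^(n-1)) * real n) * t^n / fact n) sums (t * sinh (2*t))"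
    by (rule ser1[OF sinh_ser])
  note s2 = cosh_ser[of 2 t]
  note s3 = const_ser[of 1 t]
  have s4: "(\<lambda>n. (if n < 2 then 0 else (if n - 2 = 0 then 1 else 0) * (real n * (real n - 1))) * t^n / fact n) sums (t^2 * 1)"
    by (rule ser2[OF const_ser])
  define q where "q n = (1/2 * (if n < 1 then 0 else (if even (n-1) then 0 else 2^(n-1)) * real n) - (if even n then 2^n else 0) + (if n = 0 then 1 else 0)) + (if n < 2 then 0 else (if n - 2 = 0 then 1 else 0) * (real n * (real n - 1)))" for n :: nat
  have S: "(\<lambda>n. q n * t^n / fact n) sums ((1/2 * (t * sinh (2*t)) - cosh (2*t) + 1) + t^2 * 1)"
    unfolding q_def by (intro ser_add ser_diff ser_cmult s1 s2 s3 s4)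
  have eq: "(1/2 * (t * sinh (2*t)) - cosh (2*t) + 1) + t^2 * 1 = t * sinh t * cosh t - 2 * (sinh t)^2 + t^2"
    by (simp add: sinh_double cosh_double cosh_square_eq)
  have q6: "q 6 > 0" by (simp add: q_def)
  have qn: "q n \<ge> 0" for n
  proof (cases "n < 4")
    case True then have "n = 0 \<or> n = 1 \<or> n = 2 \<or> n = 3" by arith
    then show ?thesis by (auto simp: q_def)
  next
    case False
    show ?thesis
    proof (cases "even n")
      case True
      then have "odd (n-1)" using False by simp
      moreover have "(2::real)^n = 2 * 2^(n-1)" using False by (metis Suc_diff_1 gr0I not_less_zero numeral_One numerals(2) power_Suc zero_less_numeral)
      moreover have "real n \<ge> 4" using False by simp
      ultimately show ?thesis using True False by (simp add: q_def)
    next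
      case odd: False
      then have "even (n-1)" using False by simp
      then show ?thesis using odd False by (simp add: q_def)
    qed
  qed
  show ?thesis using ser_pos[OF S assms qn q6] eq by simp
qed

lemma pow3_bound:
  assumes "n \<ge> 9"
  shows "(3::real)^n \<ge> 3 + 8 * real n * (real n - 1) + real n * (real n - 1) * 2^(n-1)"
  using assms
proof (induction n rule: nat_induct_at_least)
  case base then show ?case by simp
next
  case (Suc n)
  define N where "N = real n"
  define P where "P = (2::real)^(n-1)"
  have N9: "N \<ge> 9" using Suc by (simp add: N_def)
  have P0: "P \<ge> 0" by (simp add: P_def)
  have P2: "(2::real)^(Suc n - 1) = 2 * P" using Suc unfolding P_def
    by (metis Suc_diff_1 diff_Suc_1 less_le_trans power_Suc zero_less_Suc zero_less_numeral)
  have IH: "3^n \<ge> 3 + 8 * N * (N - 1) + N * (N - 1) * P" using Suc by (simp add: N_def P_def)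
  have a: "N * (N - 5) * P \<ge> 0" using N9 P0 by simp
  have "(3::real)^Suc n = 3 * 3^n" by simp
  also have "\<dots> \<ge> 3 * (3 + 8 * N * (N - 1) + N * (N - 1) * P)" using mult_left_mono[OF IH, of 3] by simp
  finally have "(3::real)^Suc n \<ge> 3 * (3 + 8 * N * (N - 1) + N * (N - 1) * P)" .
  moreover have "3 * (3 + 8 * N * (N - 1) + N * (N - 1) * P) \<ge> 3 + 8 * (N+1) * N + (N+1) * N * (2 * P)"
  proof -
    have b: "N * N \<ge> 9 * N" using N9 by (simp add: mult_right_mono)
    have a': "N * N * P - 5 * (N * P) \<ge> 0" using a by (simp add: algebra_simps)
    have "3 * (3 + 8 * N * (N - 1) + N * (N - 1) * P) - (3 + 8 * (N+1) * N + (N+1) * N * (2 * P))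
       = 6 + 16 * (N * N) - 32 * N + (N * N * P - 5 * (N * P))" by (simp add: algebra_simps)
    then show ?thesis using a' b N9 by linarith
  qed
  ultimately have G: "3 + 8 * (N+1) * N + (N+1) * N * (2 * P) \<le> 3^Suc n" by linarith
  have e: "3 + 8 * real (Suc n) * (real (Suc n) - 1) + real (Suc n) * (real (Suc n) - 1) * 2^(Suc n - 1)
     = 3 + 8 * (N+1) * N + (N+1) * N * (2 * P)" using P2 by (simp add: N_def algebra_simps)
  show ?case using G e by linarith
qed

lemma sinh3: "sinh (3 * t) = 3 * sinh t + 4 * sinh t ^ 3" for t :: real
proof -
  have "sinh (3*t) = sinh (2*t + t)" by simp
  also have "\<dots> = 3 * sinh t + 4 * sinh t ^ 3"
    using cosh_square_eq[of t] unfolding sinh_add sinh_double cosh_double by algebra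
  finally show ?thesis .
qed

lemma K_pos:
  fixes t :: real assumes "t > 0"
  shows "2 * sinh t ^ 3 - t^2 * sinh t * cosh t - 2 * t^2 * sinh t + t^3 > 0"
proof -
  note s1 = sinh_ser[of 3 t]
  note s2 = sinh_ser[of 1 t]
  have s3: "(\<lambda>n. (if n < 2 then 0 else (if even (n-2) then 0 else 2^(n-2)) * (real n * (real n - 1))) * t^n / fact n) sums (t^2 * sinh (2*t))"
    by (rule ser2[OF sinh_ser])
  have s4: "(\<lambda>n. (if n < 2 then 0 else (if even (n-2) then 0 else 1^(n-2)) * (real n * (real n - 1))) * t^n / fact n) sums (t^2 * sinh (1*t))"
    by (rule ser2[OF sinh_ser])
  have s5: "(\<lambda>n. (if n < 3 then 0 else (if n - 3 = 0 then 1 else 0) * (real n * (real n - 1) * (real n - 2))) * t^n / fact n) sums (t^3 * 1)"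
    by (rule ser3[OF const_ser])
  define q where "q n = 1/2 * ((if even n then 0 else 3^n) - 3 * (if even n then 0 else 1^n))
     - 1/2 * (if n < 2 then 0 else (if even (n-2) then 0 else 2^(n-2)) * (real n * (real n - 1)))
     - 2 * (if n < 2 then 0 else (if even (n-2) then 0 else 1^(n-2)) * (real n * (real n - 1)))
     + (if n < 3 then 0 else (if n - 3 = 0 then 1 else 0) * (real n * (real n - 1) * (real n - 2)))" for n :: nat
  have S: "(\<lambda>n. q n * t^n / fact n) sums (1/2 * (sinh (3*t) - 3 * sinh (1*t)) - 1/2 * (t^2 * sinh (2*t)) - 2 * (t^2 * sinh (1*t)) + t^3 * 1)"
    unfolding q_def by (intro ser_add ser_diff ser_cmult s1 s2 s3 s4 s5)
  have eq: "1/2 * (sinh (3*t) - 3 * sinh (1*t)) - 1/2 * (t^2 * sinh (2*t)) - 2 * (t^2 * sinh (1*t)) + t^3 * 1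
      = 2 * sinh t ^ 3 - t^2 * sinh t * cosh t - 2 * t^2 * sinh t + t^3"
    by (simp add: sinh3 sinh_double)
  have q7: "q 7 > 0" by (simp add: q_def)
  have qn: "q n \<ge> 0" for n
  proof (cases "n < 9")
    case True then have "n = 0 \<or> n = 1 \<or> n = 2 \<or> n = 3 \<or> n = 4 \<or> n = 5 \<or> n = 6 \<or> n = 7 \<or> n = 8" by arith
    then show ?thesis by (auto simp: q_def)
  next
    case False
    then obtain m where m: "n = m + 9" by (metis add.commute le_Suc_ex not_less)
    show ?thesis
    proof (cases "even m")
      case True
      define N where "N = real m + 9"
      have B: "(3::real)^m * 19683 \<ge> 3 + 8 * (N * N) - 8 * N + 256 * (N * N * 2^m) - 256 * (N * 2^m)"
        using pow3_bound[of "m+9"] by (simp add: N_def power_add algebra_simps)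
      have P: "N * N * 2^m \<ge> N * 2^m" by (simp add: N_def)
      have NN: "N * N \<ge> N" by (simp add: N_def)
      have "q n = 1/2 * (3^m * 19683) - 3/2 - 64 * (N * N * 2^m) + 64 * (N * 2^m) - 2 * (N * N) + 2 * N"
        using True by (simp add: q_def m N_def power_add algebra_simps)
      then show ?thesis using B P NN by linarith
    next
      case False
      then show ?thesis by (simp add: q_def m)
    qed
  qed
  show ?thesis using ser_pos[OF S assms qn q7] eq by simp
qed

lemma H_pos:
  fixes t :: real assumes "t > 0"
  shows "sinh t ^ 3 - 2 * t^2 * sinh t + t^3 * cosh t - t^2 * sinh t * cosh t + t^3 > 0"
proof -
  note s1 = sinh_ser[of 3 t]
  note s2 = sinh_ser[of 1 t]
  have s3: "(\<lambda>n. (if n < 2 then 0 else (if even (n-2) then 0 else 1^(n-2)) * (real n * (real n - 1))) * t^n / fact n) sums (t^2 * sinh (1*t))"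
    by (rule ser2[OF sinh_ser])
  have s4: "(\<lambda>n. (if n < 3 then 0 else (if even (n-3) then 1^(n-3) else 0) * (real n * (real n - 1) * (real n - 2))) * t^n / fact n) sums (t^3 * cosh (1*t))"
    by (rule ser3[OF cosh_ser])
  have s5: "(\<lambda>n. (if n < 2 then 0 else (if even (n-2) then 0 else 2^(n-2)) * (real n * (real n - 1))) * t^n / fact n) sums (t^2 * sinh (2*t))"
    by (rule ser2[OF sinh_ser])
  have s6: "(\<lambda>n. (if n < 3 then 0 else (if n - 3 = 0 then 1 else 0) * (real n * (real n - 1) * (real n - 2))) * t^n / fact n) sums (t^3 * 1)"
    by (rule ser3[OF const_ser])
  define q where "q n = 1/4 * ((if even n then 0 else 3^n) - 3 * (if even n then 0 else 1^n))
     - 2 * (if n < 2 then 0 else (if even (n-2) then 0 else 1^(n-2)) * (real n * (real n - 1)))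
     + (if n < 3 then 0 else (if even (n-3) then 1^(n-3) else 0) * (real n * (real n - 1) * (real n - 2)))
     - 1/2 * (if n < 2 then 0 else (if even (n-2) then 0 else 2^(n-2)) * (real n * (real n - 1)))
     + (if n < 3 then 0 else (if n - 3 = 0 then 1 else 0) * (real n * (real n - 1) * (real n - 2)))" for n :: nat
  have S: "(\<lambda>n. q n * t^n / fact n) sums (1/4 * (sinh (3*t) - 3 * sinh (1*t)) - 2 * (t^2 * sinh (1*t)) + t^3 * cosh (1*t) - 1/2 * (t^2 * sinh (2*t)) + t^3 * 1)"
    unfolding q_def by (intro ser_add ser_diff ser_cmult s1 s2 s3 s4 s5 s6)
  have eq: "1/4 * (sinh (3*t) - 3 * sinh (1*t)) - 2 * (t^2 * sinh (1*t)) + t^3 * cosh (1*t) - 1/2 * (t^2 * sinh (2*t)) + t^3 * 1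
      = sinh t ^ 3 - 2 * t^2 * sinh t + t^3 * cosh t - t^2 * sinh t * cosh t + t^3"
    by (simp add: sinh3 sinh_double)
  have q9: "q 9 > 0" by (simp add: q_def)
  have qn: "q n \<ge> 0" for n
  proof (cases "n < 9")
    case True then have "n = 0 \<or> n = 1 \<or> n = 2 \<or> n = 3 \<or> n = 4 \<or> n = 5 \<or> n = 6 \<or> n = 7 \<or> n = 8" by arith
    then show ?thesis by (auto simp: q_def)
  next
    case False
    then obtain m where m: "n = m + 9" by (metis add.commute le_Suc_ex not_less)
    show ?thesis
    proof (cases "even m")
      case True
      define N where "N = real m + 9"
      have B: "(3::real)^m * 19683 \<ge> 3 + 8 * (N * N) - 8 * N + 256 * (N * N * 2^m) - 256 * (N * 2^m)"
        using pow3_bound[of "m+9"] by (simp add: N_def power_add algebra_simps)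
      have P: "N * N * 2^m \<ge> N * 2^m" by (simp add: N_def)
      have NN: "N * N \<ge> N" by (simp add: N_def)
      have C: "N * N * N - 3 * (N * N) + 2 * N \<ge> 0"
      proof -
        have "N * N * N - 3 * (N * N) + 2 * N = N * ((N - 1) * (N - 2))" by (simp add: algebra_simps)
        moreover have "N * ((N - 1) * (N - 2)) \<ge> 0" by (simp add: N_def)
        ultimately show ?thesis by simp
      qed
      have "q n = 1/4 * (3^m * 19683) - 3/4 - 2 * (N * N) + 2 * N + (N * N * N - 3 * (N * N) + 2 * N) - 64 * (N * N * 2^m) + 64 * (N * 2^m)"
        using True by (simp add: q_def m N_def power_add algebra_simps)
      then show ?thesis using B P NN C by linarith
    next
      case False
      then show ?thesis by (simp add: q_def m)
    qed
  qed
  show ?thesis using ser_pos[OF S assms qn q9] eq by simp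
qed

lemma TC_pos:
  fixes t :: real assumes "t > 0"
  shows "t * cosh t - sinh t > 0"
proof -
  have s1: "(\<lambda>n. (if n < 1 then 0 else (if even (n-1) then 1^(n-1) else 0) * real n) * t^n / fact n) sums (t * cosh (1*t))"
    by (rule ser1[OF cosh_ser])
  note s2 = sinh_ser[of 1 t]
  define q where "q n = (if n < 1 then 0 else (if even (n-1) then 1^(n-1) else 0) * real n) - (if even n then 0 else 1^n)" for n :: nat
  have S: "(\<lambda>n. q n * t^n / fact n) sums (t * cosh (1*t) - sinh (1*t))"
    unfolding q_def by (intro ser_diff s1 s2)
  have q3: "q 3 > 0" by (simp add: q_def)
  have qn: "q n \<ge> 0" for n
  proof (cases "n = 0")
    case True then show ?thesis by (simp add: q_def)
  next
    case False
    then show ?thesis by (cases "even n") (auto simp: q_def)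
  qed
  show ?thesis using ser_pos[OF S assms qn q3] by simp
qed

lemma sinh_gt:
  fixes t :: real assumes "t > 0"
  shows "sinh t - t > 0"
proof -
  have s1: "(\<lambda>n. (if n < 1 then 0 else (if n - 1 = 0 then 1 else 0) * real n) * t^n / fact n) sums (t * 1)"
    by (rule ser1[OF const_ser])
  note s2 = sinh_ser[of 1 t]
  define q where "q n = (if even n then 0 else 1^n) - (if n < 1 then 0 else (if n - 1 = 0 then 1 else 0) * real n)" for n :: nat
  have S: "(\<lambda>n. q n * t^n / fact n) sums (sinh (1*t) - t * 1)"
    unfolding q_def by (intro ser_diff s1 s2)
  have q3: "q 3 > 0" by (simp add: q_def)
  have qn: "q n \<ge> 0" for n
    by (auto simp: q_def)
  show ?thesis using ser_pos[OF S assms qn q3] by simp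
qed


lemma pos_from_deriv:
  fixes f f' :: "real \<Rightarrow> real"
  assumes d: "\<And>x. x > 0 \<Longrightarrow> (f has_real_derivative f' x) (at x)"
    and p: "\<And>x. x > 0 \<Longrightarrow> f' x > 0"
    and l: "(f \<longlongrightarrow> 0) (at_right 0)" and t: "t > 0"
  shows "f t > 0"
proof -
  have mono: "f a < f b" if "0 < a" "a < b" for a b
  proof (rule DERIV_pos_imp_increasing_open[OF \<open>a < b\<close>])
    show "\<exists>y. (f has_real_derivative y) (at x) \<and> 0 < y" if "a < x" "x < b" for x
      using d p that \<open>0 < a\<close> by (meson less_trans)
    show "continuous_on {a..b} f"
    proof (intro continuous_at_imp_continuous_on ballI)
      fix x assume "x \<in> {a..b}"
      then have "x > 0" using \<open>0 < a\<close> by auto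
      then show "isCont f x" using DERIV_isCont[OF d] by blast
    qed
  qed
  have "0 \<le> f (t/2)"
  proof (rule tendsto_le[OF _ tendsto_const l])
    show "at_right (0::real) \<noteq> bot" by simp
    show "\<forall>\<^sub>F x in at_right 0. f x \<le> f (t / 2)"
      unfolding eventually_at_right_field using t
      by (intro exI[of _ "t/2"]) (auto intro!: less_imp_le mono)
  qed
  also have "f (t/2) < f t" using t by (intro mono) auto
  finally show ?thesis .
qed

lemma dA: assumes "x > 0" shows "((\<lambda>t::real. 2 * ln (sinh t / t) - t * cosh t / sinh t + 1) has_real_derivative
   (x * sinh x * cosh x - 2 * sinh x ^ 2 + x^2) / (x * sinh x ^ 2)) (at x)"
proof -
  have s: "sinh x > 0" using assms by simp
  show ?thesis using assms
    apply -
    apply (rule derivative_eq_intros refl | simp)+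
    using s assms apply (simp add: field_simps)
    using cosh_square_eq[of x] unfolding power2_eq_square by algebra
qed

lemma dB: assumes "x > 0" shows "((\<lambda>t::real. t * cosh t / sinh t - 1 - ln (2 * sinh t / t - 1)) has_real_derivative
   (2 * sinh x ^ 3 - x^2 * sinh x * cosh x - 2 * x^2 * sinh x + x^3) / (x * sinh x ^ 2 * (2 * sinh x - x))) (at x)"
proof -
  have s: "sinh x > 0" using assms by simp
  have g: "sinh x - x > 0" using assms by (rule sinh_gt)
  show ?thesis using assms g
    apply -
    apply (rule derivative_eq_intros refl | simp)+
    using s assms g apply (simp add: field_simps)
    using cosh_square_eq[of x] unfolding power2_eq_square by algebra
qed

lemma dC: assumes "x > 0" shows "((\<lambda>t::real. ln (cosh t + 1 - sinh t / t) - t * cosh t / sinh t + 1) has_real_derivative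
   (sinh x ^ 3 - 2 * x^2 * sinh x + x^3 * cosh x - x^2 * sinh x * cosh x + x^3) / (x * sinh x ^ 2 * (x * cosh x + x - sinh x))) (at x)"
proof -
  have s: "sinh x > 0" using assms by simp
  have g: "x * cosh x - sinh x > 0" using assms by (rule TC_pos)
  have p: "sinh x / x < cosh x + 1" using g assms by (simp add: field_simps)
  define D where "D = x * cosh x + x - sinh x"
  have D0: "D > 0" using g assms by (simp add: D_def)
  have eq: "cosh x + 1 - sinh x / x = D / x" using assms by (simp add: D_def field_simps)
  have eq2: "x * cosh x + x - sinh x = D" by (simp add: D_def)
  show ?thesis using assms p
    apply -
    apply (rule derivative_eq_intros refl | simp)+
    apply (simp only: eq eq2)
    using s assms D0 apply (simp add: field_simps)
    using cosh_square_eq[of x] D_def unfolding power2_eq_square by algebra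
qed

lemma keyA: fixes t :: real assumes "t > 0" shows "t * cosh t / sinh t - 1 < 2 * ln (sinh t / t)"
proof -
  have "2 * ln (sinh t / t) - t * cosh t / sinh t + 1 > 0"
  proof (rule pos_from_deriv[where f = "\<lambda>t::real. 2 * ln (sinh t / t) - t * cosh t / sinh t + 1" and f'="\<lambda>x. (x * sinh x * cosh x - 2 * sinh x ^ 2 + x^2) / (x * sinh x ^ 2)"])
    show "(x * sinh x * cosh x - 2 * sinh x ^ 2 + x^2) / (x * sinh x ^ 2) > 0" if "x > 0" for x :: real
      using NA_pos[OF that] that by (intro divide_pos_pos) auto
    show "((\<lambda>t::real. 2 * ln (sinh t / t) - t * cosh t / sinh t + 1) \<longlongrightarrow> 0) (at_right 0)"
      by real_asymp
  qed (auto intro!: dA assms)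
  then show ?thesis by simp
qed

lemma keyB: fixes t :: real assumes "t > 0" shows "ln (2 * sinh t / t - 1) < t * cosh t / sinh t - 1"
proof -
  have "t * cosh t / sinh t - 1 - ln (2 * sinh t / t - 1) > 0"
  proof (rule pos_from_deriv[where f = "\<lambda>t::real. t * cosh t / sinh t - 1 - ln (2 * sinh t / t - 1)" and f'="\<lambda>x. (2 * sinh x ^ 3 - x^2 * sinh x * cosh x - 2 * x^2 * sinh x + x^3) / (x * sinh x ^ 2 * (2 * sinh x - x))"])
    show "(2 * sinh x ^ 3 - x^2 * sinh x * cosh x - 2 * x^2 * sinh x + x^3) / (x * sinh x ^ 2 * (2 * sinh x - x)) > 0" if "x > 0" for x :: real
      using K_pos[OF that] that sinh_gt[OF that] by (intro divide_pos_pos) auto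
    show "((\<lambda>t::real. t * cosh t / sinh t - 1 - ln (2 * sinh t / t - 1)) \<longlongrightarrow> 0) (at_right 0)"
      by real_asymp
  qed (auto intro!: dB assms)
  then show ?thesis by simp
qed

lemma keyC: fixes t :: real assumes "t > 0" shows "t * cosh t / sinh t - 1 < ln (cosh t + 1 - sinh t / t)"
proof -
  have "ln (cosh t + 1 - sinh t / t) - t * cosh t / sinh t + 1 > 0"
  proof (rule pos_from_deriv[where f = "\<lambda>t::real. ln (cosh t + 1 - sinh t / t) - t * cosh t / sinh t + 1" and f'="\<lambda>x. (sinh x ^ 3 - 2 * x^2 * sinh x + x^3 * cosh x - x^2 * sinh x * cosh x + x^3) / (x * sinh x ^ 2 * (x * cosh x + x - sinh x))"])
    show "(sinh x ^ 3 - 2 * x^2 * sinh x + x^3 * cosh x - x^2 * sinh x * cosh x + x^3) / (x * sinh x ^ 2 * (x * cosh x + x - sinh x)) > 0" if "x > 0" for x :: real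
      using H_pos[OF that] that TC_pos[OF that] by (intro divide_pos_pos) auto
    show "((\<lambda>t::real. ln (cosh t + 1 - sinh t / t) - t * cosh t / sinh t + 1) \<longlongrightarrow> 0) (at_right 0)"
      by real_asymp
  qed (auto intro!: dC assms)
  then show ?thesis by simp
qed


lemma final:
  fixes g p r :: real
  assumes g: "g > 0" and p: "p > 1" and r: "r > 0"
    and hA: "r < 2 * ln p" and hB: "ln (2 * p - 1) < r" and hC: "r < ln (1 + r * p)"
  defines "G \<equiv> g" and "L \<equiv> g * p" and "I \<equiv> g * exp r"
  shows "(G * I / L < sqrt (I * G) \<and> sqrt (I * G) < log_mean I G \<and> log_mean I G < L)
    \<and> ((log_mean I G)\<^sup>2 < L * log_mean I G \<and> L * log_mean I G < log_mean (I\<^sup>2) (G\<^sup>2)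
         \<and> log_mean (I\<^sup>2) (G\<^sup>2) < L * ((I + G) / 2))"
proof -
  define E where "E = exp r"
  define F where "F = exp (r/2)"
  have F0: "F > 0" by (simp add: F_def)
  have EF: "E = F * F" unfolding E_def F_def by (simp flip: exp_add)
  have E1: "E > 1" using r by (simp add: E_def)
  have Fp: "F < p"
  proof -
    have "r/2 < ln p" using hA by simp
    then have "exp (r/2) < exp (ln p)" by simp
    then show ?thesis using p by (simp add: F_def)
  qed
  have i2: "F * r < E - 1"
  proof -
    have "sinh (r/2) - r/2 > 0" using r by (intro sinh_gt) simp
    then have "r < exp (r/2) - exp (-(r/2))" by (simp add: sinh_field_def)
    then have "r < F - 1/F" by (simp add: F_def exp_minus field_simps)
    then have "F * r < F * (F - 1/F)" using F0 by simp
    moreover have "F * (F - 1/F) = F * F - 1" using F0 by (simp add: field_simps)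
    ultimately show ?thesis using EF by linarith
  qed
  have i3: "E - 1 < r * p"
  proof -
    have "1 + r * p > 0" using r p by (simp add: add_pos_pos)
    then show ?thesis using exp_less_mono[OF hC] by (simp add: E_def)
  qed
  have i5: "2 * p - 1 < E"
  proof -
    have "2 * p - 1 > 0" using p by simp
    then show ?thesis using exp_less_mono[OF hB] by (simp add: E_def)
  qed
  have sq: "sqrt (I * G) = g * F"
  proof -
    have "I * G = (g * F)^2" by (simp add: I_def G_def E_def[symmetric] EF power2_eq_square mult_ac)
    then show ?thesis using g F0 by simp
  qed
  have lm1: "log_mean I G = g * (E - 1) / r"
  proof -
    have "ln I - ln G = r" using g by (simp add: I_def G_def ln_mult)
    then show ?thesis by (simp add: log_mean_def I_def G_def E_def algebra_simps)
  qed
  have lm2: "log_mean (I\<^sup>2) (G\<^sup>2) = g^2 * (E * E - 1) / (2 * r)"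
  proof -
    have "ln (I\<^sup>2) - ln (G\<^sup>2) = 2 * r" using g by (simp add: I_def G_def ln_mult power_mult_distrib ln_realpow)
    then show ?thesis by (simp add: log_mean_def I_def G_def E_def power2_eq_square algebra_simps)
  qed
  define X where "X = g * (E - 1) / r"
  have X0: "X > 0" using g E1 r by (simp add: X_def)
  have XL: "X < g * p"
  proof -
    have "g * (E - 1) < g * (r * p)" using mult_strict_left_mono[OF i3 g] .
    then show ?thesis using r by (simp add: X_def pos_divide_less_eq algebra_simps)
  qed
  have c1: "G * I / L < sqrt (I * G)"
  proof -
    have "F * F < p * F" using Fp F0 by simp
    then have "g * (F * F) < g * (p * F)" using g by simp
    then show ?thesis using sq g p EF by (simp add: G_def I_def L_def E_def[symmetric] field_simps)
  qed
  have c2: "sqrt (I * G) < log_mean I G"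
  proof -
    have "g * (F * r) < g * (E - 1)" using mult_strict_left_mono[OF i2 g] .
    then have "g * F < g * (E - 1) / r" using r by (simp add: pos_less_divide_eq algebra_simps)
    then show ?thesis using sq lm1 by simp
  qed
  have c3: "log_mean I G < L" using lm1 XL by (simp add: X_def L_def)
  have c4: "(log_mean I G)\<^sup>2 < L * log_mean I G"
    using lm1 XL X0 by (simp add: X_def[symmetric] L_def power2_eq_square)
  have c5: "L * log_mean I G < log_mean (I\<^sup>2) (G\<^sup>2)"
  proof -
    have "2 * p * (E - 1) < (E + 1) * (E - 1)" using i5 E1 by (intro mult_strict_right_mono) auto
    then have "g^2 * (2 * p * (E - 1)) < g^2 * ((E + 1) * (E - 1))" using g by simp
    then have "g^2 * (2 * p * (E - 1)) / (2 * r) < g^2 * ((E + 1) * (E - 1)) / (2 * r)"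
      using r by (intro divide_strict_right_mono) auto
    moreover have "L * log_mean I G = g^2 * (2 * p * (E - 1)) / (2 * r)"
      unfolding lm1 using r by (simp add: L_def power2_eq_square field_simps)
    moreover have "log_mean (I\<^sup>2) (G\<^sup>2) = g^2 * ((E + 1) * (E - 1)) / (2 * r)"
      using lm2 by (simp add: algebra_simps)
    ultimately show ?thesis by simp
  qed
  have c6: "log_mean (I\<^sup>2) (G\<^sup>2) < L * ((I + G) / 2)"
  proof -
    have "(E - 1) * (E + 1) < (r * p) * (E + 1)" using i3 E1 by (intro mult_strict_right_mono) auto
    then have "g^2 * ((E - 1) * (E + 1)) < g^2 * ((r * p) * (E + 1))" using g by simp
    then have "g^2 * ((E - 1) * (E + 1)) / (2 * r) < g^2 * ((r * p) * (E + 1)) / (2 * r)"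
      using r by (intro divide_strict_right_mono) auto
    moreover have "L * ((I + G) / 2) = g^2 * ((r * p) * (E + 1)) / (2 * r)"
      using r by (simp add: L_def I_def G_def E_def[symmetric] power2_eq_square field_simps)
    moreover have "log_mean (I\<^sup>2) (G\<^sup>2) = g^2 * ((E - 1) * (E + 1)) / (2 * r)"
      using lm2 by (simp add: algebra_simps)
    ultimately show ?thesis by simp
  qed
  show ?thesis using c1 c2 c3 c4 c5 c6 by blast
qed

lemma main_lt:
  fixes a b :: real
  assumes b: "0 < b" and ab: "b < a"
  shows "(geo_mean a b * identric_mean a b / log_mean a b < sqrt (identric_mean a b * geo_mean a b)
      \<and> sqrt (identric_mean a b * geo_mean a b) < log_mean (identric_mean a b) (geo_mean a b)
      \<and> log_mean (identric_mean a b) (geo_mean a b) < log_mean a b)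
    \<and> ((log_mean (identric_mean a b) (geo_mean a b))\<^sup>2 < log_mean a b * log_mean (identric_mean a b) (geo_mean a b)
      \<and> log_mean a b * log_mean (identric_mean a b) (geo_mean a b) < log_mean ((identric_mean a b)\<^sup>2) ((geo_mean a b)\<^sup>2)
      \<and> log_mean ((identric_mean a b)\<^sup>2) ((geo_mean a b)\<^sup>2) < log_mean a b * ((identric_mean a b + geo_mean a b) / 2))"
proof -
  have a: "0 < a" using b ab by simp
  define g where "g = sqrt (a * b)"
  define t where "t = (ln a - ln b) / 2"
  have g0: "g > 0" using a b by (simp add: g_def)
  have t0: "t > 0" using a b ab by (simp add: t_def)
  have lng: "ln g = (ln a + ln b) / 2" using a b by (simp add: g_def ln_sqrt ln_mult)
  have ea: "a = g * exp t"
  proof -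
    have "ln (g * exp t) = ln g + t" using g0 by (simp add: ln_mult)
    also have "\<dots> = ln a" unfolding t_def lng by (simp add: field_simps)
    finally have "ln (g * exp t) = ln a" .
    then show ?thesis using a g0 by simp
  qed
  have eb: "b = g * exp (-t)"
  proof -
    have "ln (g * exp (-t)) = ln g - t" using g0 by (simp add: ln_mult)
    also have "\<dots> = ln b" unfolding t_def lng by (simp add: field_simps)
    finally have "ln (g * exp (-t)) = ln b" .
    then show ?thesis using b g0 by simp
  qed
  have s0: "sinh t > 0" using t0 by simp
  have amb: "a - b = 2 * g * sinh t" by (subst ea, subst eb) (simp add: sinh_field_def algebra_simps)
  have apb: "a + b = 2 * g * cosh t" by (subst ea, subst eb) (simp add: cosh_field_def algebra_simps)
  have lnab: "ln a - ln b = 2 * t" by (simp add: t_def)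
  define p where "p = sinh t / t"
  define r where "r = t * cosh t / sinh t - 1"
  have L: "log_mean a b = g * p" unfolding log_mean_def amb lnab p_def using t0 by simp
  have G: "geo_mean a b = g" by (simp add: geo_mean_def g_def)
  have I: "identric_mean a b = g * exp r"
  proof -
    have lna: "ln a = ln g + t" unfolding t_def lng by (simp add: field_simps)
    have lnb: "ln b = ln g - t" unfolding t_def lng by (simp add: field_simps)
    have q: "a powr a / b powr b = exp (a * ln a - b * ln b)" using a b by (simp add: powr_def exp_diff)
    have num: "a * ln a - b * ln b = (a - b) * ln g + t * (a + b)" by (simp add: lna lnb algebra_simps)
    have ex: "(a * ln a - b * ln b) / (a - b) = ln g + t * cosh t / sinh t"
      using s0 g0 unfolding num amb apb by (simp add: field_simps)
    have "(a powr a / b powr b) powr (1 / (a - b)) = exp (ln g + t * cosh t / sinh t)"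
      by (subst q) (simp add: powr_def ex[symmetric])
    then have "identric_mean a b = exp (-1) * exp (ln g + t * cosh t / sinh t)"
      by (simp add: identric_mean_def exp_minus divide_inverse mult.commute)
    also have "\<dots> = exp (ln g) * exp r" by (simp add: r_def flip: exp_add)
    also have "\<dots> = g * exp r" using g0 by simp
    finally show ?thesis .
  qed
  have p1: "p > 1" using sinh_gt[OF t0] t0 by (simp add: p_def)
  have r0: "r > 0" using TC_pos[OF t0] s0 by (simp add: r_def field_simps)
  have hA: "r < 2 * ln p" using keyA[OF t0] by (simp add: r_def p_def)
  have hB: "ln (2 * p - 1) < r" using keyB[OF t0] by (simp add: r_def p_def)
  have hC: "r < ln (1 + r * p)"
  proof -
    have e: "cosh t + 1 - sinh t / t = 1 + r * p" using s0 t0 by (simp add: r_def p_def field_simps)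
    have "r < ln (cosh t + 1 - sinh t / t)" using keyC[OF t0] by (simp only: r_def)
    then show ?thesis by (simp only: e)
  qed
  show ?thesis using final[OF g0 p1 r0 hA hB hC] unfolding L G I .
qed

lemma geo_sym: "geo_mean a b = geo_mean b a" by (simp add: geo_mean_def mult.commute)
lemma log_sym: "log_mean a b = log_mean b a"
proof -
  have "(a - b) / (ln a - ln b) = (-(b - a)) / (-(ln b - ln a))" by simp
  also have "\<dots> = (b - a) / (ln b - ln a)" by (rule minus_divide_divide)
  finally show ?thesis by (simp add: log_mean_def)
qed
lemma ident_exp: fixes x y :: real shows "0 < x \<Longrightarrow> 0 < y \<Longrightarrow> (x powr x / y powr y) powr (1 / (x - y)) = exp ((x * ln x - y * ln y) / (x - y))"
proof -
  assume "0 < x" "0 < y"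
  then have q: "x powr x / y powr y = exp (x * ln x - y * ln y)" by (simp add: powr_def exp_diff)
  show ?thesis by (subst q) (simp add: powr_def)
qed
lemma ident_sym: fixes a b :: real shows "0 < a \<Longrightarrow> 0 < b \<Longrightarrow> identric_mean a b = identric_mean b a"
proof -
  assume a: "0 < a" and b: "0 < b"
  have "(a * ln a - b * ln b) / (a - b) = (-(b * ln b - a * ln a)) / (-(b - a))" by simp
  also have "\<dots> = (b * ln b - a * ln a) / (b - a)" by (rule minus_divide_divide)
  finally show ?thesis using a b by (simp add: identric_mean_def ident_exp)
qed

theorem corollary1:
  fixes a b :: real
  assumes "a > 0" and "b > 0" and "a \<noteq> b"
  defines "G \<equiv> geo_mean a b" and "L \<equiv> log_mean a b" and "I \<equiv> identric_mean a b"
  shows "(G * I / L < sqrt (I * G) \<and> sqrt (I * G) < log_mean I G \<and> log_mean I G < L)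
    \<and> ((log_mean I G)\<^sup>2 < L * log_mean I G \<and> L * log_mean I G < log_mean (I\<^sup>2) (G\<^sup>2)
         \<and> log_mean (I\<^sup>2) (G\<^sup>2) < L * ((I + G) / 2))"
proof (cases "b < a")
  case True
  show ?thesis unfolding G_def L_def I_def by (rule main_lt[OF assms(2) True])
next
  case False
  then have "a < b" using assms(3) by simp
  have e1: "geo_mean b a = geo_mean a b" by (rule geo_sym)
  have e2: "log_mean b a = log_mean a b" by (rule log_sym)
  have e3: "identric_mean b a = identric_mean a b" using assms by (intro ident_sym) auto
  show ?thesis using main_lt[OF assms(1) \<open>a < b\<close>] unfolding G_def L_def I_def e1 e2 e3 .
qed
end
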